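(* Let $k$ be a positive integer and let $G$ and $G'$ be graphs with maximum degree $2$ having the same number of vertices and the same number of edges. If every component of $G$ and every component of $G'$ is either a cycle with more than $k$ vertices or a path with at least $k-1$ vertices, then $\mathcal{D}_k(G)=\mathcal{D}_k(G')$.
   Context: All graphs are finite and simple. For a graph $G$, the $k$-deck $\mathcal{D}_k(G)$ is the multiset of isomorphism classes of the induced subgraphs $G[X]$ over all $k$-element subsets $X\subseteq V(G)$. A path component may have a single vertex (an isolated vertex is a path with $1$ vertex). *)

theory Defs
  imports Main "HOL-Library.Multiset"
begin

definition graph :: "'a set \<Rightarrow> 'a set set \<Rightarrow> bool" where
  "graph V E \<longleftrightarrow> finite V \<and> (\<forall>e\<in>E. e \<subseteq> V \<and> card e = 2)"

definition degree :: "'a set set \<Rightarrow> 'a \<Rightarrow> nat" where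
  "degree E v = card {e\<in>E. v \<in> e}"

definition max_degree_le :: "'a set \<Rightarrow> 'a set set \<Rightarrow> nat \<Rightarrow> bool" where
  "max_degree_le V E d \<longleftrightarrow> (\<forall>v\<in>V. degree E v \<le> d)"

definition induced_edges :: "'a set set \<Rightarrow> 'a set \<Rightarrow> 'a set set" where
  "induced_edges E X = {e\<in>E. e \<subseteq> X}"

definition graph_iso :: "'a set \<Rightarrow> 'a set set \<Rightarrow> 'b set \<Rightarrow> 'b set set \<Rightarrow> bool" where
  "graph_iso V E W F \<longleftrightarrow> (\<exists>f. bij_betw f V W \<and>
      (\<forall>u\<in>V. \<forall>v\<in>V. {u, v} \<in> E \<longleftrightarrow> {f u, f v} \<in> F))"

text \<open>Isomorphism class of a finite graph, represented by all isomorphic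
graphs on natural-number vertices (every finite graph has such copies).\<close>
definition iso_class :: "'a set \<Rightarrow> 'a set set \<Rightarrow> (nat set \<times> nat set set) set" where
  "iso_class V E = {(W, F). graph W F \<and> graph_iso V E W F}"

definition deck :: "nat \<Rightarrow> 'a set \<Rightarrow> 'a set set \<Rightarrow> (nat set \<times> nat set set) set multiset" where
  "deck k V E = image_mset (\<lambda>X. iso_class X (induced_edges E X))
                   (mset_set {X. X \<subseteq> V \<and> card X = k})"

definition adj :: "'a set set \<Rightarrow> 'a \<Rightarrow> 'a \<Rightarrow> bool" where
  "adj E u v \<longleftrightarrow> {u, v} \<in> E"

definition components :: "'a set \<Rightarrow> 'a set set \<Rightarrow> 'a set set" where
  "components V E = {{v\<in>V. (adj E)\<^sup>*\<^sup>* u v} | u. u \<in> V}"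

definition is_cycle :: "'a set \<Rightarrow> 'a set set \<Rightarrow> bool" where
  "is_cycle V E \<longleftrightarrow> (\<exists>vs. distinct vs \<and> length vs \<ge> 3 \<and> set vs = V \<and>
      E = {{vs ! i, vs ! ((i + 1) mod length vs)} | i. i < length vs})"

definition is_path :: "'a set \<Rightarrow> 'a set set \<Rightarrow> bool" where
  "is_path V E \<longleftrightarrow> (\<exists>vs. distinct vs \<and> length vs \<ge> 1 \<and> set vs = V \<and>
      E = {{vs ! i, vs ! (i + 1)} | i. i + 1 < length vs})"

end

theory Submission
  imports Defs "HOL-Library.FuncSet"
begin


lemma card_fibers:
  assumes "finite S" "finite B" "f ` S \<subseteq> B"
  shows "card S = (\<Sum>b\<in>B. card {x\<in>S. f x = b})"
  using sum.group[OF assms, of "\<lambda>_. 1::nat"] by simp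

datatype atom = AEq nat nat | AAd nat nat

fun a1 :: "atom \<Rightarrow> nat" where "a1 (AEq i j) = i" | "a1 (AAd i j) = i"
fun a2 :: "atom \<Rightarrow> nat" where "a2 (AEq i j) = j" | "a2 (AAd i j) = j"

fun holds :: "'a set set \<Rightarrow> (nat \<Rightarrow> 'a) \<Rightarrow> atom \<Rightarrow> bool" where
  "holds E f (AEq i j) = (f i = f j)"
| "holds E f (AAd i j) = ({f i, f j} \<in> E)"

definition atoms :: "nat set \<Rightarrow> atom set" where
  "atoms A = {a. a1 a \<in> A \<and> a2 a \<in> A}"

lemma atoms_eq: "atoms A = (\<lambda>(i,j). AEq i j) ` (A \<times> A) \<union> (\<lambda>(i,j). AAd i j) ` (A \<times> A)"
  unfolding atoms_def
  apply (rule set_eqI)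
  subgoal for a by (cases a) auto
  done

lemma finite_atoms: "finite A \<Longrightarrow> finite (atoms A)"
  unfolding atoms_eq by auto

lemma holds_cong:
  assumes "a1 a \<in> S" "a2 a \<in> S" "\<And>x. x \<in> S \<Longrightarrow> f x = g x"
  shows "holds E f a = holds E g a"
  using assms by (cases a) auto

definition Ncount :: "'a set set \<Rightarrow> 'a set \<Rightarrow> nat set \<Rightarrow> atom set \<Rightarrow> nat" where
  "Ncount E V A T = card {f \<in> A \<rightarrow>\<^sub>E V. \<forall>a\<in>T. holds E f a}"

definition crosses :: "atom \<Rightarrow> nat set \<Rightarrow> nat set \<Rightarrow> bool" where
  "crosses a A A1 \<longleftrightarrow> (a1 a \<in> A1 \<and> a2 a \<in> A - A1) \<or> (a2 a \<in> A1 \<and> a1 a \<in> A - A1)"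

definition Tconn :: "nat set \<Rightarrow> atom set \<Rightarrow> bool" where
  "Tconn A T \<longleftrightarrow> (\<forall>A1. A1 \<subseteq> A \<longrightarrow> A1 \<noteq> {} \<longrightarrow> A1 \<noteq> A \<longrightarrow> (\<exists>a\<in>T. crosses a A A1))"

definition Conn :: "'a set set \<Rightarrow> 'a set \<Rightarrow> 'a set \<Rightarrow> bool" where
  "Conn E V W \<longleftrightarrow> W \<subseteq> V \<and> W \<noteq> {} \<and>
     (\<forall>W1. W1 \<subseteq> W \<longrightarrow> W1 \<noteq> {} \<longrightarrow> W1 \<noteq> W \<longrightarrow> (\<exists>x\<in>W1. \<exists>y\<in>W - W1. {x,y} \<in> E))"

lemma Ncount_split:
  assumes "A1 \<subseteq> A" "T \<subseteq> atoms A" "\<forall>a\<in>T. \<not> crosses a A A1"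
  shows "Ncount E V A T = Ncount E V A1 {a\<in>T. a \<in> atoms A1} * Ncount E V (A - A1) {a\<in>T. a \<in> atoms (A - A1)}"
proof -
  let ?A2 = "A - A1"
  let ?T1 = "{a\<in>T. a \<in> atoms A1}" and ?T2 = "{a\<in>T. a \<in> atoms ?A2}"
  let ?S = "{f \<in> A \<rightarrow>\<^sub>E V. \<forall>a\<in>T. holds E f a}"
  let ?S1 = "{f \<in> A1 \<rightarrow>\<^sub>E V. \<forall>a\<in>?T1. holds E f a}"
  let ?S2 = "{f \<in> ?A2 \<rightarrow>\<^sub>E V. \<forall>a\<in>?T2. holds E f a}"
  have Tsplit: "a \<in> ?T1 \<or> a \<in> ?T2" if "a \<in> T" for a
    using assms that unfolding crosses_def atoms_def by auto
  have "bij_betw (\<lambda>f. (restrict f A1, restrict f ?A2)) ?S (?S1 \<times> ?S2)"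
  proof (rule bij_betwI[where g = "\<lambda>(g1, g2). (\<lambda>x. if x \<in> A1 then g1 x else g2 x)"])
    show "(\<lambda>f. (restrict f A1, restrict f ?A2)) \<in> ?S \<rightarrow> ?S1 \<times> ?S2"
    proof
      fix f assume f: "f \<in> ?S"
      have "holds E (restrict f A1) a" if "a \<in> ?T1" for a
        using f that holds_cong[of a A1 "restrict f A1" f E] unfolding atoms_def by auto
      moreover have "holds E (restrict f ?A2) a" if "a \<in> ?T2" for a
        using f that holds_cong[of a ?A2 "restrict f ?A2" f E] unfolding atoms_def by auto
      ultimately show "(restrict f A1, restrict f ?A2) \<in> ?S1 \<times> ?S2"
        using f assms(1) by auto
    qed
    show "(\<lambda>(g1, g2). (\<lambda>x. if x \<in> A1 then g1 x else g2 x)) \<in> ?S1 \<times> ?S2 \<rightarrow> ?S"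
    proof
      fix p assume p: "p \<in> ?S1 \<times> ?S2"
      obtain g1 g2 where pg: "p = (g1, g2)" by (cases p)
      let ?g = "\<lambda>x. if x \<in> A1 then g1 x else g2 x"
      have g1: "g1 \<in> A1 \<rightarrow>\<^sub>E V" "\<forall>a\<in>?T1. holds E g1 a" and g2: "g2 \<in> ?A2 \<rightarrow>\<^sub>E V" "\<forall>a\<in>?T2. holds E g2 a"
        using p pg by auto
      have "?g \<in> A \<rightarrow>\<^sub>E V" using g1(1) g2(1) assms(1) by (auto simp: PiE_def extensional_def Pi_def)
      moreover have "holds E ?g a" if "a \<in> T" for a
      proof (cases "a \<in> ?T1")
        case True
        then show ?thesis using g1(2) holds_cong[of a A1 ?g g1 E] unfolding atoms_def by auto
      next
        case False
        then have "a \<in> ?T2" using Tsplit that by auto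
        then show ?thesis using g2(2) holds_cong[of a ?A2 ?g g2 E] unfolding atoms_def by auto
      qed
      ultimately show "(case p of (g1, g2) \<Rightarrow> \<lambda>x. if x \<in> A1 then g1 x else g2 x) \<in> ?S"
        using pg by auto
    qed
    show "(case (restrict f A1, restrict f ?A2) of (g1, g2) \<Rightarrow> \<lambda>x. if x \<in> A1 then g1 x else g2 x) = f"
      if "f \<in> ?S" for f
      using that assms(1) by (auto simp: PiE_def extensional_def fun_eq_iff)
    show "(restrict (case p of (g1, g2) \<Rightarrow> \<lambda>x. if x \<in> A1 then g1 x else g2 x) A1,
           restrict (case p of (g1, g2) \<Rightarrow> \<lambda>x. if x \<in> A1 then g1 x else g2 x) ?A2) = p"
      if "p \<in> ?S1 \<times> ?S2" for p
      using that by (auto simp: PiE_def extensional_def fun_eq_iff split: prod.splits)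
  qed
  then have "card ?S = card (?S1 \<times> ?S2)" by (rule bij_betw_same_card)
  then show ?thesis unfolding Ncount_def card_cartesian_product .
qed


definition Pu :: "nat \<Rightarrow> nat set set" where "Pu u = {{a, Suc a} | a. Suc a < u}"

definition onto :: "nat set \<Rightarrow> atom set \<Rightarrow> nat \<Rightarrow> nat" where
  "onto A T u = card {g \<in> A \<rightarrow>\<^sub>E {0..<u}. g ` A = {0..<u} \<and> (\<forall>a\<in>T. holds (Pu u) g a)}"

definition goodG :: "nat \<Rightarrow> 'a set \<Rightarrow> 'a set set \<Rightarrow> bool" where
  "goodG k V E \<longleftrightarrow> finite V \<and> (\<forall>W. Conn E V W \<longrightarrow> card W \<le> k \<longrightarrow>
     (\<exists>\<beta>. bij_betw \<beta> {0..<card W} W \<and>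
        (\<forall>a<card W. \<forall>b<card W. ({\<beta> a, \<beta> b} \<in> E) = ({a,b} \<in> Pu (card W)))))"

definition cnt :: "'a set set \<Rightarrow> 'a set \<Rightarrow> nat \<Rightarrow> nat" where
  "cnt E V u = card {W. Conn E V W \<and> card W = u}"

lemma image_Conn:
  assumes "Tconn A T" "T \<subseteq> atoms A" "f \<in> A \<rightarrow>\<^sub>E V" "\<forall>a\<in>T. holds E f a" "A \<noteq> {}"
  shows "Conn E V (f ` A)"
  unfolding Conn_def
proof (intro conjI allI impI)
  show "f ` A \<subseteq> V" using assms(3) by auto
  show "f ` A \<noteq> {}" using assms(5) by auto
  fix W1 assume W1: "W1 \<subseteq> f ` A" "W1 \<noteq> {}" "W1 \<noteq> f ` A"
  let ?A1 = "{x\<in>A. f x \<in> W1}"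
  have "?A1 \<subseteq> A" by auto
  moreover have "?A1 \<noteq> {}" using W1 by auto
  moreover have "?A1 \<noteq> A" using W1 by auto
  ultimately obtain a where a: "a \<in> T" "crosses a A ?A1" using assms(1) unfolding Tconn_def by blast
  have h: "holds E f a" using a assms(4) by auto
  show "\<exists>x\<in>W1. \<exists>y\<in>f ` A - W1. {x, y} \<in> E"
  proof (cases a)
    case (AEq i j)
    then show ?thesis using a h unfolding crosses_def by auto
  next
    case (AAd i j)
    have e: "{f i, f j} \<in> E" using h AAd by simp
    have "(i \<in> ?A1 \<and> j \<in> A - ?A1) \<or> (j \<in> ?A1 \<and> i \<in> A - ?A1)"
      using a AAd unfolding crosses_def by simp
    then show ?thesis
    proof
      assume "i \<in> ?A1 \<and> j \<in> A - ?A1"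
      then show ?thesis using e by blast
    next
      assume "j \<in> ?A1 \<and> i \<in> A - ?A1"
      moreover have "{f j, f i} \<in> E" using e by (simp add: insert_commute)
      ultimately show ?thesis by blast
    qed
  qed
qed

lemma fiber_card:
  assumes bij: "bij_betw \<beta> {0..<u} W"
    and ed: "\<forall>a<u. \<forall>b<u. ({\<beta> a, \<beta> b} \<in> E) = ({a,b} \<in> Pu u)"
    and T: "T \<subseteq> atoms A" and WV: "W \<subseteq> V"
  shows "card {f \<in> A \<rightarrow>\<^sub>E V. f ` A = W \<and> (\<forall>a\<in>T. holds E f a)} = onto A T u"
proof -
  let ?O = "{g \<in> A \<rightarrow>\<^sub>E {0..<u}. g ` A = {0..<u} \<and> (\<forall>a\<in>T. holds (Pu u) g a)}"
  let ?F = "{f \<in> A \<rightarrow>\<^sub>E V. f ` A = W \<and> (\<forall>a\<in>T. holds E f a)}"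
  have inj: "inj_on \<beta> {0..<u}" and img: "\<beta> ` {0..<u} = W" using bij by (auto simp: bij_betw_def)
  have tr: "holds E (\<lambda>x. \<beta> (g x)) a = holds (Pu u) g a" if "g \<in> A \<rightarrow> {0..<u}" "a \<in> atoms A" for g a
  proof (cases a)
    case (AEq i j)
    then have "g i < u" "g j < u" using that unfolding atoms_def by auto
    then show ?thesis using AEq inj by (auto simp: inj_on_eq_iff)
  next
    case (AAd i j)
    then have "g i < u" "g j < u" using that unfolding atoms_def by auto
    then show ?thesis using AAd ed by auto
  qed
  have tr2: "holds E (restrict (\<lambda>x. \<beta> (g x)) A) a = holds (Pu u) g a" if "g \<in> A \<rightarrow> {0..<u}" "a \<in> atoms A" for g a
    using tr[OF that] holds_cong[of a A "restrict (\<lambda>x. \<beta> (g x)) A" "\<lambda>x. \<beta> (g x)" E] that(2)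
    unfolding atoms_def by auto
  have "bij_betw (\<lambda>g. restrict (\<lambda>x. \<beta> (g x)) A) ?O ?F"
  proof (rule bij_betwI[where g = "\<lambda>f. restrict (\<lambda>x. inv_into {0..<u} \<beta> (f x)) A"])
    show "(\<lambda>g. restrict (\<lambda>x. \<beta> (g x)) A) \<in> ?O \<rightarrow> ?F"
    proof
      fix g assume g: "g \<in> ?O"
      have "(\<lambda>x. \<beta> (g x)) ` A = \<beta> ` (g ` A)" by auto
      then have "(\<lambda>x. \<beta> (g x)) ` A = W" using g img by auto
      then show "restrict (\<lambda>x. \<beta> (g x)) A \<in> ?F"
        using g tr2 T WV img by (auto simp: PiE_def Pi_def)
    qed
    show "(\<lambda>f. restrict (\<lambda>x. inv_into {0..<u} \<beta> (f x)) A) \<in> ?F \<rightarrow> ?O"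
    proof
      fix f assume f: "f \<in> ?F"
      let ?g = "restrict (\<lambda>x. inv_into {0..<u} \<beta> (f x)) A"
      have gin: "?g \<in> A \<rightarrow>\<^sub>E {0..<u}"
      proof -
        have "inv_into {0..<u} \<beta> (f x) \<in> {0..<u}" if "x \<in> A" for x
          using that f img by (intro inv_into_into) auto
        then show ?thesis by (auto simp: PiE_def Pi_def)
      qed
      have bg: "\<beta> (?g x) = f x" if "x \<in> A" for x
      proof -
        have "f x \<in> \<beta> ` {0..<u}" using that f img by auto
        then show ?thesis using that by (simp add: f_inv_into_f)
      qed
      have gim: "?g ` A = inv_into {0..<u} \<beta> ` W"
        using f by auto
      have "inv_into {0..<u} \<beta> ` W = {0..<u}"
        using img inj by (metis bij bij_betw_def bij_betw_inv_into)
      then have gim2: "?g ` A = {0..<u}" using gim by simp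
      have "holds (Pu u) ?g a" if "a \<in> T" for a
      proof -
        have "holds E (restrict (\<lambda>x. \<beta> (?g x)) A) a" 
        proof -
          have "holds E f a" using f that by auto
          moreover have "holds E (restrict (\<lambda>x. \<beta> (?g x)) A) a = holds E f a"
            using holds_cong[of a A "restrict (\<lambda>x. \<beta> (?g x)) A" f E] that T bg
            unfolding atoms_def by auto
          ultimately show ?thesis by simp
        qed
        then show ?thesis using tr2[of ?g a] gin that T by auto
      qed
      then show "?g \<in> ?O" using gin gim2 by auto
    qed
    show "restrict (\<lambda>x. inv_into {0..<u} \<beta> (restrict (\<lambda>x. \<beta> (g x)) A x)) A = g" if "g \<in> ?O" for g
      using that inj by (auto simp: fun_eq_iff PiE_def extensional_def Pi_def)
    show "restrict (\<lambda>x. \<beta> (restrict (\<lambda>x. inv_into {0..<u} \<beta> (f x)) A x)) A = f" if "f \<in> ?F" for f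
    proof -
      have "\<beta> (inv_into {0..<u} \<beta> (f x)) = f x" if "x \<in> A" for x
      proof -
        have "f x \<in> \<beta> ` {0..<u}" using that \<open>f \<in> ?F\<close> img by auto
        then show ?thesis by (simp add: f_inv_into_f)
      qed
      then show ?thesis using \<open>f \<in> ?F\<close> by (auto simp: fun_eq_iff PiE_def extensional_def)
    qed
  qed
  then show ?thesis unfolding onto_def by (simp add: bij_betw_same_card)
qed


lemma conn_formula:
  assumes good: "goodG k V E" and A: "finite A" "A \<noteq> {}" "card A \<le> k"
    and Tc: "Tconn A T" and T: "T \<subseteq> atoms A"
  shows "Ncount E V A T = (\<Sum>u\<in>{1..card A}. cnt E V u * onto A T u)"
proof -
  have finV: "finite V" using good unfolding goodG_def by auto
  let ?S = "{f \<in> A \<rightarrow>\<^sub>E V. \<forall>a\<in>T. holds E f a}"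
  let ?W = "{W. Conn E V W \<and> card W \<le> card A}"
  have finS: "finite ?S" using A finV by (intro finite_subset[OF _ finite_PiE[of A "\<lambda>_. V"]]) auto
  have finW: "finite ?W"
    by (rule finite_subset[of _ "Pow V"]) (use finV in \<open>auto simp: Conn_def\<close>)
  have imW: "(\<lambda>f. f ` A) ` ?S \<subseteq> ?W"
  proof
    fix W assume "W \<in> (\<lambda>f. f ` A) ` ?S"
    then obtain f where f: "f \<in> ?S" "W = f ` A" by auto
    have "Conn E V W" using image_Conn[OF Tc T _ _ A(2), of f V E] f by auto
    moreover have "card W \<le> card A" using f card_image_le A(1) by auto
    ultimately show "W \<in> ?W" by auto
  qed
  have "card ?S = (\<Sum>W\<in>?W. card {f\<in>?S. f ` A = W})"
    by (rule card_fibers[OF finS finW imW])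
  also have "\<dots> = (\<Sum>W\<in>?W. onto A T (card W))"
  proof (rule sum.cong[OF refl])
    fix W assume W: "W \<in> ?W"
    then obtain \<beta> where b: "bij_betw \<beta> {0..<card W} W"
      "\<forall>a<card W. \<forall>b<card W. ({\<beta> a, \<beta> b} \<in> E) = ({a,b} \<in> Pu (card W))"
      using good A(3) unfolding goodG_def by fastforce
    have WV: "W \<subseteq> V" using W unfolding Conn_def by auto
    have "{f\<in>?S. f ` A = W} = {f \<in> A \<rightarrow>\<^sub>E V. f ` A = W \<and> (\<forall>a\<in>T. holds E f a)}" by auto
    then show "card {f\<in>?S. f ` A = W} = onto A T (card W)"
      using fiber_card[OF b T WV] by simp
  qed
  also have "\<dots> = (\<Sum>u\<in>{1..card A}. \<Sum>W\<in>{W\<in>?W. card W = u}. onto A T (card W))"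
  proof (rule sum.group[symmetric, OF finW])
    show "finite {1..card A}" by simp
    show "card ` ?W \<subseteq> {1..card A}"
    proof
      fix u assume "u \<in> card ` ?W"
      then obtain W where W: "W \<in> ?W" "u = card W" by auto
      have "finite W" "W \<noteq> {}" using W finV unfolding Conn_def by (auto intro: finite_subset)
      then show "u \<in> {1..card A}" using W by (auto simp: Suc_le_eq card_gt_0_iff)
    qed
  qed
  also have "\<dots> = (\<Sum>u\<in>{1..card A}. cnt E V u * onto A T u)"
  proof (rule sum.cong[OF refl])
    fix u assume u: "u \<in> {1..card A}"
    have "{W\<in>?W. card W = u} = {W. Conn E V W \<and> card W = u}" using u by auto
    then show "(\<Sum>W\<in>{W\<in>?W. card W = u}. onto A T (card W)) = cnt E V u * onto A T u"
      unfolding cnt_def by simp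
  qed
  finally show ?thesis unfolding Ncount_def .
qed

lemma Ncount_empty: "Ncount E V {} T = (if T \<subseteq> atoms {} then 1 else Ncount E V {} T)"
  by (auto simp: Ncount_def atoms_def)

lemma Ncount_eq:
  assumes g1: "goodG k V E" and g2: "goodG k V' E'"
    and c: "\<And>u. 1 \<le> u \<Longrightarrow> u \<le> k \<Longrightarrow> cnt E V u = cnt E' V' u"
  shows "finite A \<Longrightarrow> card A \<le> k \<Longrightarrow> T \<subseteq> atoms A \<Longrightarrow> Ncount E V A T = Ncount E' V' A T"
proof (induction "card A" arbitrary: A T rule: less_induct)
  case less
  show ?case
  proof (cases "A = {}")
    case True
    then have "T = {}" using less.prems by (auto simp: atoms_def)
    then show ?thesis using True by (simp add: Ncount_def)
  next
    case ne: False
    show ?thesis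
    proof (cases "Tconn A T")
      case True
      have "Ncount E V A T = (\<Sum>u\<in>{1..card A}. cnt E V u * onto A T u)"
        by (rule conn_formula[OF g1 less.prems(1) ne less.prems(2) True less.prems(3)])
      also have "\<dots> = (\<Sum>u\<in>{1..card A}. cnt E' V' u * onto A T u)"
        using c less.prems(2) by (intro sum.cong) auto
      also have "\<dots> = Ncount E' V' A T"
        by (rule conn_formula[OF g2 less.prems(1) ne less.prems(2) True less.prems(3), symmetric])
      finally show ?thesis .
    next
      case False
      then obtain A1 where A1: "A1 \<subseteq> A" "A1 \<noteq> {}" "A1 \<noteq> A" "\<forall>a\<in>T. \<not> crosses a A A1"
        unfolding Tconn_def by blast
      have fin1: "finite A1" "finite (A - A1)" using A1 less.prems by (auto intro: finite_subset)
      have lt1: "card A1 < card A" using A1 less.prems(1) by (meson psubsetI psubset_card_mono)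
      have lt2: "card (A - A1) < card A" using A1 less.prems(1)
        by (metis Diff_disjoint Diff_subset Int_absorb2 card_seteq finite_subset less_le card_mono)
      have i1: "Ncount E V A1 {a\<in>T. a \<in> atoms A1} = Ncount E' V' A1 {a\<in>T. a \<in> atoms A1}"
        using less.hyps[OF lt1 fin1(1)] lt1 less.prems(2) by (auto intro!: less.hyps[OF lt1 fin1(1)])
      have i2: "Ncount E V (A - A1) {a\<in>T. a \<in> atoms (A - A1)} = Ncount E' V' (A - A1) {a\<in>T. a \<in> atoms (A - A1)}"
        using less.hyps[OF lt2 fin1(2)] lt2 less.prems(2) by (auto intro!: less.hyps[OF lt2 fin1(2)])
      show ?thesis
        using Ncount_split[OF A1(1) less.prems(3) A1(4), of E V] Ncount_split[OF A1(1) less.prems(3) A1(4), of E' V']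
          i1 i2 by simp
    qed
  qed
qed



lemma alt_sum_Pow: "finite X \<Longrightarrow> (\<Sum>D\<in>Pow X. (-1::int) ^ card D) = (if X = {} then 1 else 0)"
proof (induction X rule: finite_induct)
  case empty
  then show ?case by simp
next
  case (insert x X)
  have "Pow (insert x X) = Pow X \<union> insert x ` Pow X" by (rule Pow_insert)
  moreover have "Pow X \<inter> insert x ` Pow X = {}" using insert by auto
  moreover have "inj_on (insert x) (Pow X)" using insert by (auto simp: inj_on_def) 
  ultimately have "(\<Sum>D\<in>Pow (insert x X). (-1::int) ^ card D) =
     (\<Sum>D\<in>Pow X. (-1::int) ^ card D) + (\<Sum>D\<in>Pow X. (-1::int) ^ card (insert x D))"
    using insert by (simp add: sum.union_disjoint sum.reindex)
  also have "(\<Sum>D\<in>Pow X. (-1::int) ^ card (insert x D)) = - (\<Sum>D\<in>Pow X. (-1::int) ^ card D)"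
  proof -
    have "(\<Sum>D\<in>Pow X. (-1::int) ^ card (insert x D)) = (\<Sum>D\<in>Pow X. - ((-1::int) ^ card D))"
    proof (rule sum.cong[OF refl])
      fix D assume "D \<in> Pow X"
      then have "finite D" "x \<notin> D" using insert by (auto intro: finite_subset)
      then have "card (insert x D) = Suc (card D)" by simp
      then show "(-1::int) ^ card (insert x D) = - ((-1) ^ card D)" by simp
    qed
    then show ?thesis by (simp add: sum_negf)
  qed
  finally show ?case by simp
qed

lemma alt_sum_between:
  assumes "finite U"
  shows "(\<Sum>T\<in>{T. S \<subseteq> T \<and> T \<subseteq> U}. (-1::int) ^ card (T - S)) = (if S = U then 1 else 0)"
proof (cases "S \<subseteq> U")
  case False
  then have e: "{T. S \<subseteq> T \<and> T \<subseteq> U} = {}" by auto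
  have "S \<noteq> U" using False by auto
  then show ?thesis unfolding e by simp
next
  case True
  have "(\<Sum>T\<in>{T. S \<subseteq> T \<and> T \<subseteq> U}. (-1::int) ^ card (T - S)) = (\<Sum>D\<in>Pow (U - S). (-1::int) ^ card D)"
    by (rule sum.reindex_bij_witness[where i = "\<lambda>D. S \<union> D" and j = "\<lambda>T. T - S"]) (use True in auto)
  also have "\<dots> = (if U - S = {} then 1 else 0)" using assms by (simp add: alt_sum_Pow)
  finally show ?thesis using True by auto
qed

definition Sat :: "'a set set \<Rightarrow> (nat \<Rightarrow> 'a) \<Rightarrow> nat set \<Rightarrow> atom set" where
  "Sat E f A = {a \<in> atoms A. holds E f a}"

definition Exact :: "'a set set \<Rightarrow> 'a set \<Rightarrow> nat set \<Rightarrow> atom set \<Rightarrow> nat" where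
  "Exact E V A S = card {f \<in> A \<rightarrow>\<^sub>E V. Sat E f A = S}"

lemma exact_ie:
  assumes "finite A" "finite V"
  shows "int (Exact E V A S) = (\<Sum>T\<in>{T. S \<subseteq> T \<and> T \<subseteq> atoms A}. (-1) ^ card (T - S) * int (Ncount E V A T))"
proof -
  let ?F = "A \<rightarrow>\<^sub>E V" and ?U = "atoms A"
  have finF: "finite ?F" using assms by (simp add: finite_PiE)
  have finU: "finite ?U" using assms by (simp add: finite_atoms)
  have finTs: "finite {T. S \<subseteq> T \<and> T \<subseteq> atoms A}"
    by (rule finite_subset[of _ "Pow (atoms A)"]) (use finU in auto)
  have N: "int (Ncount E V A T) = (\<Sum>f\<in>?F. if T \<subseteq> Sat E f A then 1 else 0)" if "T \<subseteq> ?U" for T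
  proof -
    have "{f \<in> ?F. \<forall>a\<in>T. holds E f a} = {f \<in> ?F. T \<subseteq> Sat E f A}"
      using that unfolding Sat_def by auto
    then show ?thesis unfolding Ncount_def using finF by (simp add: sum.If_cases) (simp add: Int_def)
  qed
  have "(\<Sum>T\<in>{T. S \<subseteq> T \<and> T \<subseteq> atoms A}. (-1) ^ card (T - S) * int (Ncount E V A T))
     = (\<Sum>T\<in>{T. S \<subseteq> T \<and> T \<subseteq> atoms A}. \<Sum>f\<in>?F. (if T \<subseteq> Sat E f A then (-1) ^ card (T - S) else 0))"
    by (rule sum.cong[OF refl]) (auto simp: N sum_distrib_left intro!: sum.cong)
  also have "\<dots> = (\<Sum>f\<in>?F. \<Sum>T\<in>{T. S \<subseteq> T \<and> T \<subseteq> atoms A}. (if T \<subseteq> Sat E f A then (-1) ^ card (T - S) else 0))"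
    by (rule sum.swap)
  also have "\<dots> = (\<Sum>f\<in>?F. if S = Sat E f A then 1 else 0)"
  proof (rule sum.cong[OF refl])
    fix f assume "f \<in> ?F"
    have sub: "Sat E f A \<subseteq> atoms A" unfolding Sat_def by auto
    have "(\<Sum>T\<in>{T. S \<subseteq> T \<and> T \<subseteq> atoms A}. (if T \<subseteq> Sat E f A then (-1::int) ^ card (T - S) else 0))
       = (\<Sum>T\<in>{T. S \<subseteq> T \<and> T \<subseteq> Sat E f A}. (-1::int) ^ card (T - S))"
      using finTs sub by (simp add: sum.If_cases) (intro sum.cong; auto)
    also have "\<dots> = (if S = Sat E f A then 1 else 0)"
      using finite_subset[OF sub finU] by (rule alt_sum_between)
    finally show "(\<Sum>T\<in>{T. S \<subseteq> T \<and> T \<subseteq> atoms A}. (if T \<subseteq> Sat E f A then (-1::int) ^ card (T - S) else 0))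
       = (if S = Sat E f A then 1 else 0)" .
  qed
  also have "\<dots> = int (Exact E V A S)"
    unfolding Exact_def using finF by (simp add: sum.If_cases) (simp add: Int_def eq_commute)
  finally show ?thesis by simp
qed



lemma graph_iso_trans:
  assumes "graph_iso V1 E1 V2 E2" "graph_iso V2 E2 V3 E3"
  shows "graph_iso V1 E1 V3 E3"
proof -
  obtain f where f: "bij_betw f V1 V2" "\<forall>u\<in>V1. \<forall>v\<in>V1. {u, v} \<in> E1 \<longleftrightarrow> {f u, f v} \<in> E2"
    using assms(1) unfolding graph_iso_def by blast
  obtain g where g: "bij_betw g V2 V3" "\<forall>u\<in>V2. \<forall>v\<in>V2. {u, v} \<in> E2 \<longleftrightarrow> {g u, g v} \<in> E3"
    using assms(2) unfolding graph_iso_def by blast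
  have "bij_betw (g \<circ> f) V1 V3" using f(1) g(1) by (rule bij_betw_trans)
  moreover have "\<forall>u\<in>V1. \<forall>v\<in>V1. {u, v} \<in> E1 \<longleftrightarrow> {(g \<circ> f) u, (g \<circ> f) v} \<in> E3"
    using f g bij_betwE[OF f(1)] by auto
  ultimately show ?thesis unfolding graph_iso_def by blast
qed

lemma graph_iso_sym:
  assumes "graph_iso V1 E1 V2 E2"
  shows "graph_iso V2 E2 V1 E1"
proof -
  obtain f where f: "bij_betw f V1 V2" "\<forall>u\<in>V1. \<forall>v\<in>V1. {u, v} \<in> E1 \<longleftrightarrow> {f u, f v} \<in> E2"
    using assms(1) unfolding graph_iso_def by blast
  let ?h = "inv_into V1 f"
  have h: "bij_betw ?h V2 V1" using f(1) by (rule bij_betw_inv_into)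
  have "{x, y} \<in> E2 \<longleftrightarrow> {?h x, ?h y} \<in> E1" if "x \<in> V2" "y \<in> V2" for x y
  proof -
    have "?h x \<in> V1" "?h y \<in> V1" using h that bij_betwE by blast+
    moreover have "f (?h x) = x" "f (?h y) = y" using f(1) that by (auto simp: bij_betw_inv_into_right)
    ultimately show ?thesis using f(2) by metis
  qed
  then show ?thesis unfolding graph_iso_def using h by blast
qed

lemma iso_class_cong:
  assumes "graph_iso V1 E1 V2 E2"
  shows "iso_class V1 E1 = iso_class V2 E2"
proof -
  have "graph_iso V1 E1 W F \<longleftrightarrow> graph_iso V2 E2 W F" for W :: "nat set" and F
  proof
    assume "graph_iso V1 E1 W F"
    then show "graph_iso V2 E2 W F" by (rule graph_iso_trans[OF graph_iso_sym[OF assms]])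
  next
    assume "graph_iso V2 E2 W F"
    then show "graph_iso V1 E1 W F" by (rule graph_iso_trans[OF assms])
  qed
  then show ?thesis unfolding iso_class_def by auto
qed

definition pbS :: "atom set \<Rightarrow> nat set set" where
  "pbS S = {{i, j} | i j. AAd i j \<in> S}"

lemma cls_eq:
  assumes "inj_on f A"
  shows "iso_class (f ` A) (induced_edges E (f ` A)) = iso_class A (pbS (Sat E f A))"
proof -
  have "graph_iso A (pbS (Sat E f A)) (f ` A) (induced_edges E (f ` A))"
    unfolding graph_iso_def
  proof (intro exI conjI ballI)
    show "bij_betw f A (f ` A)" using assms by (simp add: bij_betw_imageI)
    fix u v assume uv: "u \<in> A" "v \<in> A"
    show "{u, v} \<in> pbS (Sat E f A) \<longleftrightarrow> {f u, f v} \<in> induced_edges E (f ` A)"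
    proof
      assume "{u, v} \<in> pbS (Sat E f A)"
      then obtain i j where ij: "{u, v} = {i, j}" "AAd i j \<in> Sat E f A" unfolding pbS_def by blast
      then have "{f i, f j} \<in> E" unfolding Sat_def by auto
      moreover have "{f u, f v} = {f i, f j}" using ij(1) by (auto simp: doubleton_eq_iff)
      ultimately show "{f u, f v} \<in> induced_edges E (f ` A)" using uv unfolding induced_edges_def by auto
    next
      assume "{f u, f v} \<in> induced_edges E (f ` A)"
      then have "AAd u v \<in> Sat E f A" using uv unfolding induced_edges_def Sat_def atoms_def by auto
      then show "{u, v} \<in> pbS (Sat E f A)" unfolding pbS_def by blast
    qed
  qed
  then show ?thesis by (rule iso_class_cong[symmetric])
qed

lemma inj_iff_Sat:
  "inj_on f A \<longleftrightarrow> (\<forall>i j. AEq i j \<in> Sat E f A \<longrightarrow> i = j)"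
  unfolding inj_on_def Sat_def atoms_def by auto

lemma count_deck:
  assumes "finite V"
  shows "count (deck k V E) c = card {X. X \<subseteq> V \<and> card X = k \<and> iso_class X (induced_edges E X) = c}"
proof -
  let ?Xs = "{X. X \<subseteq> V \<and> card X = k}"
  have fin: "finite ?Xs" by (rule finite_subset[of _ "Pow V"]) (use assms in auto)
  have "count (deck k V E) c = sum (count (mset_set ?Xs)) ((\<lambda>X. iso_class X (induced_edges E X)) -` {c} \<inter> ?Xs)"
    unfolding deck_def count_image_mset using fin by simp
  also have "\<dots> = sum (\<lambda>_. 1) ((\<lambda>X. iso_class X (induced_edges E X)) -` {c} \<inter> ?Xs)"
    using fin by (intro sum.cong) auto
  also have "\<dots> = card {X. X \<subseteq> V \<and> card X = k \<and> iso_class X (induced_edges E X) = c}"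
  proof -
    have "(\<lambda>X. iso_class X (induced_edges E X)) -` {c} \<inter> ?Xs = {X. X \<subseteq> V \<and> card X = k \<and> iso_class X (induced_edges E X) = c}"
      by auto
    then show ?thesis by simp
  qed
  finally show ?thesis .
qed

lemma labelled_count:
  assumes "finite V"
  shows "card {f \<in> {0..<k} \<rightarrow>\<^sub>E V. inj_on f {0..<k} \<and> P (f ` {0..<k})}
     = prod ((-) k) {0..<k} * card {X. X \<subseteq> V \<and> card X = k \<and> P X}"
proof -
  let ?A = "{0..<k::nat}"
  let ?S = "{f \<in> ?A \<rightarrow>\<^sub>E V. inj_on f ?A \<and> P (f ` ?A)}"
  let ?B = "{X. X \<subseteq> V \<and> card X = k \<and> P X}"
  have finB: "finite ?B" by (rule finite_subset[of _ "Pow V"]) (use assms in auto)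
  have finS: "finite ?S" using assms by (intro finite_subset[OF _ finite_PiE[of ?A "\<lambda>_. V"]]) auto
  have im: "(\<lambda>f. f ` ?A) ` ?S \<subseteq> ?B"
  proof
    fix X assume "X \<in> (\<lambda>f. f ` ?A) ` ?S"
    then obtain f where "f \<in> ?S" "X = f ` ?A" by auto
    then show "X \<in> ?B" by (auto simp: card_image)
  qed
  have "card ?S = (\<Sum>X\<in>?B. card {f\<in>?S. f ` ?A = X})" by (rule card_fibers[OF finS finB im])
  also have "\<dots> = (\<Sum>X\<in>?B. prod ((-) k) {0..<k})"
  proof (rule sum.cong[OF refl])
    fix X assume X: "X \<in> ?B"
    have finX: "finite X" using X assms by (auto intro: finite_subset)
    have "{f\<in>?S. f ` ?A = X} = {f \<in> ?A \<rightarrow>\<^sub>E X. inj_on f ?A}"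
    proof (rule set_eqI, rule iffI)
      fix f assume "f \<in> {f\<in>?S. f ` ?A = X}"
      then show "f \<in> {f \<in> ?A \<rightarrow>\<^sub>E X. inj_on f ?A}" by (auto simp: PiE_def Pi_def)
    next
      fix f assume f: "f \<in> {f \<in> ?A \<rightarrow>\<^sub>E X. inj_on f ?A}"
      then have "f ` ?A \<subseteq> X" by auto
      moreover have "card (f ` ?A) = card X" using f X by (simp add: card_image)
      ultimately have "f ` ?A = X" using finX by (simp add: card_subset_eq)
      then show "f \<in> {f\<in>?S. f ` ?A = X}" using f X by (auto simp: PiE_def Pi_def)
    qed
    also have "card \<dots> = card X ^ (card ?A - card ?A) * prod ((-) (card X)) {0..<card ?A}"
      by (rule card_inj_on_subset_funcset) (use finX in auto)
    finally show "card {f\<in>?S. f ` ?A = X} = prod ((-) k) {0..<k}" using X by simp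
  qed
  finally show ?thesis by simp
qed

lemma Qcount:
  assumes "finite A" "finite V"
  shows "card {f \<in> A \<rightarrow>\<^sub>E V. Q (Sat E f A)} = (\<Sum>S\<in>Pow (atoms A). if Q S then Exact E V A S else 0)"
proof -
  let ?S = "{f \<in> A \<rightarrow>\<^sub>E V. Q (Sat E f A)}"
  have finS: "finite ?S" using assms by (intro finite_subset[OF _ finite_PiE[of A "\<lambda>_. V"]]) auto
  have finP: "finite (Pow (atoms A))" using assms by (simp add: finite_atoms)
  have im: "(\<lambda>f. Sat E f A) ` ?S \<subseteq> Pow (atoms A)" unfolding Sat_def by auto
  have "card ?S = (\<Sum>S\<in>Pow (atoms A). card {f\<in>?S. Sat E f A = S})" by (rule card_fibers[OF finS finP im])
  also have "\<dots> = (\<Sum>S\<in>Pow (atoms A). if Q S then Exact E V A S else 0)"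
  proof (rule sum.cong[OF refl])
    fix S assume "S \<in> Pow (atoms A)"
    show "card {f\<in>?S. Sat E f A = S} = (if Q S then Exact E V A S else 0)"
    proof (cases "Q S")
      case True
      then have "{f\<in>?S. Sat E f A = S} = {f \<in> A \<rightarrow>\<^sub>E V. Sat E f A = S}" by auto
      then show ?thesis using True unfolding Exact_def by simp
    next
      case False
      have e: "{f\<in>?S. Sat E f A = S} = {}" using False by auto
      show ?thesis using False by (simp only: e card.empty if_False)
    qed
  qed
  finally show ?thesis .
qed

lemma deck_from_exact:
  assumes "finite V" "finite V'"
    and ex: "\<And>S. S \<subseteq> atoms {0..<k} \<Longrightarrow> Exact E V {0..<k} S = Exact E' V' {0..<k} S"
  shows "deck k V E = deck k V' E'"
proof (rule multiset_eqI)
  fix c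
  let ?A = "{0..<k::nat}"
  define Q where "Q S = ((\<forall>i j. AEq i j \<in> S \<longrightarrow> i = j) \<and> iso_class ?A (pbS S) = c)" for S
  have key: "card {f \<in> ?A \<rightarrow>\<^sub>E W. inj_on f ?A \<and> iso_class (f ` ?A) (induced_edges F (f ` ?A)) = c}
      = (\<Sum>S\<in>Pow (atoms ?A). if Q S then Exact F W ?A S else 0)"
    if "finite W" for W :: "'c set" and F
  proof -
    have "{f \<in> ?A \<rightarrow>\<^sub>E W. inj_on f ?A \<and> iso_class (f ` ?A) (induced_edges F (f ` ?A)) = c}
        = {f \<in> ?A \<rightarrow>\<^sub>E W. Q (Sat F f ?A)}"
    proof (rule Collect_cong)
      fix f
      show "(f \<in> ?A \<rightarrow>\<^sub>E W \<and> inj_on f ?A \<and> iso_class (f ` ?A) (induced_edges F (f ` ?A)) = c) =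
            (f \<in> ?A \<rightarrow>\<^sub>E W \<and> Q (Sat F f ?A))"
        unfolding Q_def using inj_iff_Sat[of f ?A F] cls_eq[of f ?A F] by metis
    qed
    then show ?thesis using Qcount[of ?A W Q F] that by simp
  qed
  have pos: "prod ((-) k) {0..<k} > 0" by (rule prod_pos) auto
  have s: "(\<Sum>S\<in>Pow (atoms ?A). if Q S then Exact E V ?A S else 0) = (\<Sum>S\<in>Pow (atoms ?A). if Q S then Exact E' V' ?A S else 0)"
    using ex by (intro sum.cong) auto
  have "prod ((-) k) {0..<k} * count (deck k V E) c = prod ((-) k) {0..<k} * count (deck k V' E') c"
    unfolding count_deck[OF assms(1)] count_deck[OF assms(2)]
      labelled_count[OF assms(1), of k "\<lambda>X. iso_class X (induced_edges E X) = c", symmetric]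
      labelled_count[OF assms(2), of k "\<lambda>X. iso_class X (induced_edges E' X) = c", symmetric]
      key[OF assms(1), of E] key[OF assms(2), of E'] s ..
  then show "count (deck k V E) c = count (deck k V' E') c" using pos by simp
qed



lemma modcancel:
  assumes "(b + t) mod (L::nat) = (b + t') mod L" "t < L" "t' < L"
  shows "t = t'"
proof -
  have *: "t = t'" if h: "(b + t) mod L = (b + t') mod L" "t \<le> t'" "t' < L" for t t'
  proof -
    have "L dvd (b + t') - (b + t)" using mod_eq_dvd_iff_nat[of "b+t" "b+t'" L] h by simp
    then have "L dvd t' - t" by simp
    moreover have "t' - t < L" using h by simp
    ultimately have "t' - t = 0" using nat_dvd_not_less by (metis gr0I)
    then show ?thesis using h by simp
  qed
  show ?thesis
  proof (cases "t \<le> t'")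
    case True then show ?thesis using * assms by blast
  next
    case False then show ?thesis using *[of t' t] assms by simp
  qed
qed

lemma Pu_iff: "s < u \<Longrightarrow> t < u \<Longrightarrow> {s, t} \<in> Pu u \<longleftrightarrow> (Suc s = t \<or> Suc t = s)"
  unfolding Pu_def by (auto simp: doubleton_eq_iff)

lemma chain_conn:
  assumes img: "\<beta> ` {0..<u} = W" and u: "1 \<le> u" and WV: "W \<subseteq> V"
    and ed: "\<And>t. Suc t < u \<Longrightarrow> {\<beta> t, \<beta> (Suc t)} \<in> E"
  shows "Conn E V W"
  unfolding Conn_def
proof (intro conjI allI impI)
  show "W \<subseteq> V" by fact
  show "W \<noteq> {}" using img u by auto
  fix W1 assume W1: "W1 \<subseteq> W" "W1 \<noteq> {}" "W1 \<noteq> W"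
  show "\<exists>x\<in>W1. \<exists>y\<in>W - W1. {x, y} \<in> E"
  proof (rule ccontr)
    assume no: "\<not> ?thesis"
    have step: "(\<beta> t \<in> W1) = (\<beta> (Suc t) \<in> W1)" if "Suc t < u" for t
    proof -
      have b: "\<beta> t \<in> W" "\<beta> (Suc t) \<in> W" using img that by auto
      have e: "{\<beta> t, \<beta> (Suc t)} \<in> E" "{\<beta> (Suc t), \<beta> t} \<in> E" using ed[OF that] by (auto simp: insert_commute)
      show ?thesis using no b e by blast
    qed
    have all: "(\<beta> t \<in> W1) = (\<beta> 0 \<in> W1)" if "t < u" for t
      using that
    proof (induction t)
      case 0 then show ?case by simp
    next
      case (Suc t) then show ?case using step[of t] by simp
    qed
    show False
    proof (cases "\<beta> 0 \<in> W1")
      case True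
      then have "W \<subseteq> W1" using all img by auto
      then show False using W1 by auto
    next
      case False
      then have "W1 = {}" using all img W1(1) by auto
      then show False using W1 by auto
    qed
  qed
qed

lemma Conn_mono_V: "Conn E V W \<Longrightarrow> W \<subseteq> V' \<Longrightarrow> Conn E V' W"
  unfolding Conn_def by auto

locale apath =
  fixes \<nu> :: "nat \<Rightarrow> 'a" and L :: nat and C :: "'a set" and Ed :: "'a set set"
  assumes bij: "bij_betw \<nu> {0..<L} C"
    and pp: "\<And>i j. i < L \<Longrightarrow> j < L \<Longrightarrow> ({\<nu> i, \<nu> j} \<in> Ed) = (Suc i = j \<or> Suc j = i)"
begin

lemma inj: "inj_on \<nu> {0..<L}" and img: "\<nu> ` {0..<L} = C"
  using bij by (auto simp: bij_betw_def)

lemma window: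
  assumes "Conn Ed C W"
  shows "\<exists>a. a + card W \<le> L \<and> W = \<nu> ` {a..<a + card W}"
proof -
  have WC: "W \<subseteq> C" and Wne: "W \<noteq> {}" using assms unfolding Conn_def by auto
  let ?I = "{i. i < L \<and> \<nu> i \<in> W}"
  have WI: "W = \<nu> ` ?I" using WC img by auto
  have finI: "finite ?I" by simp
  have Ine: "?I \<noteq> {}" using WI Wne by auto
  define a where "a = Min ?I"
  define b where "b = Max ?I"
  have aI: "a \<in> ?I" unfolding a_def by (rule Min_in[OF finI Ine])
  have bI: "b \<in> ?I" unfolding b_def by (rule Max_in[OF finI Ine])
  have aleI: "\<And>i. i \<in> ?I \<Longrightarrow> a \<le> i" and Ileb: "\<And>i. i \<in> ?I \<Longrightarrow> i \<le> b"
    unfolding a_def b_def using finI by auto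
  have gap: "c \<in> ?I" if "a \<le> c" "c \<le> b" for c
  proof (rule ccontr)
    assume cI: "c \<notin> ?I"
    have ac: "a < c" and cb: "c < b" using that cI aI bI by (auto simp: le_less)
    let ?W1 = "\<nu> ` {i\<in>?I. i < c}"
    have "?W1 \<subseteq> W" using WI by auto
    moreover have "?W1 \<noteq> {}" using aI ac by auto
    moreover have "\<nu> b \<notin> ?W1"
    proof
      assume "\<nu> b \<in> ?W1"
      then obtain i where i: "i \<in> ?I" "i < c" "\<nu> i = \<nu> b" by auto
      then have "i = b" using inj bI by (auto dest: inj_onD)
      then show False using i cb by simp
    qed
    then have "?W1 \<noteq> W" using bI by auto
    ultimately obtain x y where xy: "x \<in> ?W1" "y \<in> W - ?W1" "{x, y} \<in> Ed"
      using assms unfolding Conn_def by meson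
    obtain i where i: "i \<in> ?I" "i < c" "x = \<nu> i" using xy by auto
    obtain j where j: "j \<in> ?I" "y = \<nu> j" using xy WI by auto
    have "\<not> j < c" using xy j by auto
    then have jc: "c < j" using j cI by (cases "j = c") auto
    have "Suc i = j \<or> Suc j = i" using pp[of i j] xy i j by auto
    then show False using i jc by auto
  qed
  have I1: "?I \<subseteq> {a..<Suc b}"
  proof
    fix i assume "i \<in> ?I"
    then have "a \<le> i" "i \<le> b" using aleI Ileb by auto
    then show "i \<in> {a..<Suc b}" by simp
  qed
  have I2: "{a..<Suc b} \<subseteq> ?I"
  proof
    fix i assume "i \<in> {a..<Suc b}"
    then show "i \<in> ?I" using gap by simp
  qed
  have Ieq: "?I = {a..<Suc b}" using I1 I2 by (rule subset_antisym)
  have "inj_on \<nu> ?I" by (rule inj_on_subset[OF inj]) auto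
  then have ci: "card (\<nu> ` ?I) = card ?I" by (rule card_image)
  have "card W = card (\<nu> ` ?I)" using WI by (rule arg_cong)
  then have "card W = card ?I" using ci by simp
  then have cardW: "card W = Suc b - a" using Ieq by simp
  have "a \<le> b" using aI bI Ileb by auto
  then have "a + card W = Suc b" using cardW by simp
  moreover have "Suc b \<le> L" using bI by simp
  ultimately show ?thesis using WI Ieq by (intro exI[of _ a]) auto
qed

lemma window_beta:
  assumes "a + u \<le> L"
  shows "bij_betw (\<lambda>t. \<nu> (a + t)) {0..<u} (\<nu> ` {a..<a + u})"
    and "\<forall>s<u. \<forall>t<u. ({\<nu> (a + s), \<nu> (a + t)} \<in> Ed) = ({s, t} \<in> Pu u)"
    and "card (\<nu> ` {a..<a + u}) = u"
proof -
  have injw: "inj_on \<nu> {a..<a+u}" by (rule inj_on_subset[OF inj]) (use assms in auto)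
  have "(\<lambda>t. \<nu> (a + t)) ` {0..<u} = \<nu> ` {a..<a + u}"
  proof -
    have "(\<lambda>t. a + t) ` {0..<u} = {a..<a+u}" using image_add_atLeastLessThan[of a 0 u] by (simp add: add.commute)
    then show ?thesis by (metis image_image)
  qed
  moreover have "inj_on (\<lambda>t. \<nu> (a + t)) {0..<u}"
  proof (rule inj_onI)
    fix x y assume "x \<in> {0..<u}" "y \<in> {0..<u}" "\<nu> (a + x) = \<nu> (a + y)"
    then have "a + x = a + y" using injw by (auto dest: inj_onD)
    then show "x = y" by simp
  qed
  ultimately show "bij_betw (\<lambda>t. \<nu> (a + t)) {0..<u} (\<nu> ` {a..<a + u})" by (simp add: bij_betw_def)
  show "\<forall>s<u. \<forall>t<u. ({\<nu> (a + s), \<nu> (a + t)} \<in> Ed) = ({s, t} \<in> Pu u)"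
    using pp assms Pu_iff by auto
  show "card (\<nu> ` {a..<a + u}) = u" using injw by (simp add: card_image)
qed

lemma window_conn:
  assumes "a + u \<le> L" "1 \<le> u"
  shows "Conn Ed C (\<nu> ` {a..<a + u})"
proof (rule chain_conn[where \<beta> = "\<lambda>t. \<nu> (a + t)" and u = u])
  show "(\<lambda>t. \<nu> (a + t)) ` {0..<u} = \<nu> ` {a..<a + u}"
    using window_beta(1)[OF assms(1)] by (simp add: bij_betw_def)
  show "1 \<le> u" by fact
  show "\<nu> ` {a..<a + u} \<subseteq> C" using img assms by auto
  show "{\<nu> (a + t), \<nu> (a + Suc t)} \<in> Ed" if "Suc t < u" for t
    using pp[of "a + t" "Suc (a + t)"] that assms by auto
qed

lemma good:
  assumes "Conn Ed C W"
  shows "\<exists>\<beta>. bij_betw \<beta> {0..<card W} W \<and> (\<forall>s<card W. \<forall>t<card W. ({\<beta> s, \<beta> t} \<in> Ed) = ({s, t} \<in> Pu (card W)))"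
proof -
  obtain a where a: "a + card W \<le> L" "W = \<nu> ` {a..<a + card W}" using window[OF assms] by blast
  show ?thesis
    apply (rule exI[of _ "\<lambda>t. \<nu> (a + t)"])
    using window_beta(1,2)[OF a(1)] a(2) by simp
qed

lemma count:
  assumes "1 \<le> u"
  shows "card {W. Conn Ed C W \<and> card W = u} = L + 1 - u"
proof -
  have eq: "{W. Conn Ed C W \<and> card W = u} = (\<lambda>a. \<nu> ` {a..<a + u}) ` {..<L + 1 - u}"
  proof (rule set_eqI, rule iffI)
    fix W assume "W \<in> {W. Conn Ed C W \<and> card W = u}"
    then have c: "Conn Ed C W" "card W = u" by auto
    then obtain a where "a + u \<le> L" "W = \<nu> ` {a..<a + u}" using window[OF c(1)] by auto
    then show "W \<in> (\<lambda>a. \<nu> ` {a..<a + u}) ` {..<L + 1 - u}" using assms by auto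
  next
    fix W assume "W \<in> (\<lambda>a. \<nu> ` {a..<a + u}) ` {..<L + 1 - u}"
    then obtain a where a: "a < L + 1 - u" "W = \<nu> ` {a..<a + u}" by auto
    then have "a + u \<le> L" by simp
    then show "W \<in> {W. Conn Ed C W \<and> card W = u}" using a window_conn window_beta(3) assms by auto
  qed
  have "inj_on (\<lambda>a. \<nu> ` {a..<a + u}) {..<L + 1 - u}"
  proof (rule inj_onI)
    fix a a' assume a: "a \<in> {..<L + 1 - u}" "a' \<in> {..<L + 1 - u}" and e: "\<nu> ` {a..<a + u} = \<nu> ` {a'..<a' + u}"
    have s1: "{a..<a + u} \<subseteq> {0..<L}" "{a'..<a' + u} \<subseteq> {0..<L}" using a by auto
    have se: "{a..<a + u} = {a'..<a' + u}"
      using inj_on_image_eq_iff[OF inj s1] e by simp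
    have "a \<in> {a..<a + u}" "a' \<in> {a'..<a' + u}" using assms by auto
    then have "a \<in> {a'..<a' + u}" "a' \<in> {a..<a + u}" using se by auto
    then show "a = a'" by auto
  qed
  then have "card ((\<lambda>a. \<nu> ` {a..<a + u}) ` {..<L + 1 - u}) = card {..<L + 1 - u}" by (rule card_image)
  then show ?thesis by (simp only: eq card_lessThan)
qed

end


locale acycle =
  fixes \<nu> :: "nat \<Rightarrow> 'a" and L :: nat and C :: "'a set" and Ed :: "'a set set"
  assumes bij: "bij_betw \<nu> {0..<L} C"
    and cp: "\<And>i j. i < L \<Longrightarrow> j < L \<Longrightarrow> ({\<nu> i, \<nu> j} \<in> Ed) = (Suc i mod L = j \<or> Suc j mod L = i)"
begin

lemma inj: "inj_on \<nu> {0..<L}" and img: "\<nu> ` {0..<L} = C"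
  using bij by (auto simp: bij_betw_def)

lemma cardC: "card C = L" using bij by (simp add: bij_betw_same_card[symmetric])

definition cw :: "nat \<Rightarrow> nat \<Rightarrow> 'a set" where
  "cw u b = (\<lambda>t. \<nu> ((b + t) mod L)) ` {0..<u}"

lemma rot_path:
  assumes z: "z < L"
  shows "apath (\<lambda>t. \<nu> ((z + 1 + t) mod L)) (L - 1) (C - {\<nu> z}) Ed"
proof
  let ?r = "\<lambda>t. \<nu> ((z + 1 + t) mod L)"
  have Lpos: "0 < L" using z by simp
  have injr: "inj_on ?r {0..<L - 1}"
  proof (rule inj_onI)
    fix s t assume st: "s \<in> {0..<L - 1}" "t \<in> {0..<L - 1}" "?r s = ?r t"
    then have "(z + 1 + s) mod L = (z + 1 + t) mod L"
      using inj Lpos by (auto dest: inj_onD)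
    moreover have "s < L" "t < L" using st by auto
    ultimately show "s = t" by (rule modcancel)
  qed
  have sub: "?r ` {0..<L - 1} \<subseteq> C - {\<nu> z}"
  proof
    fix x assume "x \<in> ?r ` {0..<L - 1}"
    then obtain t where t: "t < L - 1" "x = ?r t" by auto
    have m: "(z + 1 + t) mod L < L" using Lpos by simp
    have "(z + 1 + t) mod L \<noteq> z"
    proof
      assume "(z + 1 + t) mod L = z"
      then have "(z + Suc t) mod L = (z + 0) mod L" using z by simp
      then have "Suc t = 0" using modcancel[of z "Suc t" L 0] t Lpos by linarith
      then show False by simp
    qed
    then have "x \<noteq> \<nu> z" using t inj m z by (auto dest: inj_onD)
    moreover have "x \<in> C" using t m img by auto
    ultimately show "x \<in> C - {\<nu> z}" by simp
  qed
  have "card (?r ` {0..<L - 1}) = L - 1" using injr by (simp add: card_image)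
  moreover have "card (C - {\<nu> z}) = L - 1" using cardC z img by (auto simp: card_Diff_singleton_if)
  moreover have "finite C" using cardC Lpos card_ge_0_finite by auto
  ultimately have "?r ` {0..<L - 1} = C - {\<nu> z}" using sub by (intro card_subset_eq) auto
  then show "bij_betw ?r {0..<L - 1} (C - {\<nu> z})" using injr by (simp add: bij_betw_def)
  fix i j assume ij: "i < L - 1" "j < L - 1"
  have m: "(z + 1 + i) mod L < L" "(z + 1 + j) mod L < L" using Lpos by auto
  have "({?r i, ?r j} \<in> Ed) = (Suc ((z + 1 + i) mod L) mod L = (z + 1 + j) mod L \<or> Suc ((z + 1 + j) mod L) mod L = (z + 1 + i) mod L)"
    using cp[OF m] .
  also have "\<dots> = ((z + 1 + Suc i) mod L = (z + 1 + j) mod L \<or> (z + 1 + Suc j) mod L = (z + 1 + i) mod L)"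
    by (simp add: mod_Suc_eq)
  also have "\<dots> = (Suc i = j \<or> Suc j = i)"
  proof -
    have e1: "((z + 1 + Suc i) mod L = (z + 1 + j) mod L) = (Suc i = j)"
    proof
      assume "(z + 1 + Suc i) mod L = (z + 1 + j) mod L"
      moreover have "Suc i < L" "j < L" using ij by auto
      ultimately show "Suc i = j" by (rule modcancel)
    qed simp
    have e2: "((z + 1 + Suc j) mod L = (z + 1 + i) mod L) = (Suc j = i)"
    proof
      assume "(z + 1 + Suc j) mod L = (z + 1 + i) mod L"
      moreover have "Suc j < L" "i < L" using ij by auto
      ultimately show "Suc j = i" by (rule modcancel)
    qed simp
    show ?thesis by (simp only: e1 e2)
  qed
  finally show "({?r i, ?r j} \<in> Ed) = (Suc i = j \<or> Suc j = i)" .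
qed

lemma exists_missing:
  assumes "W \<subseteq> C" "card W < L"
  shows "\<exists>z<L. \<nu> z \<notin> W"
proof (rule ccontr)
  assume "\<not> ?thesis"
  then have "C \<subseteq> W" using img by auto
  then have "W = C" using assms by auto
  then show False using assms cardC by simp
qed

lemma good:
  assumes "Conn Ed C W" "card W < L"
  shows "\<exists>\<beta>. bij_betw \<beta> {0..<card W} W \<and> (\<forall>s<card W. \<forall>t<card W. ({\<beta> s, \<beta> t} \<in> Ed) = ({s, t} \<in> Pu (card W)))"
proof -
  have WC: "W \<subseteq> C" using assms unfolding Conn_def by auto
  obtain z where z: "z < L" "\<nu> z \<notin> W" using exists_missing[OF WC assms(2)] by auto
  interpret r: apath "\<lambda>t. \<nu> ((z + 1 + t) mod L)" "L - 1" "C - {\<nu> z}" Ed by (rule rot_path[OF z(1)])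
  have "Conn Ed (C - {\<nu> z}) W" by (rule Conn_mono_V[OF assms(1)]) (use WC z in auto)
  then show ?thesis by (rule r.good)
qed

lemma window:
  assumes "Conn Ed C W" "card W < L"
  shows "\<exists>b<L. W = cw (card W) b"
proof -
  have WC: "W \<subseteq> C" using assms unfolding Conn_def by auto
  obtain z where z: "z < L" "\<nu> z \<notin> W" using exists_missing[OF WC assms(2)] by auto
  interpret r: apath "\<lambda>t. \<nu> ((z + 1 + t) mod L)" "L - 1" "C - {\<nu> z}" Ed by (rule rot_path[OF z(1)])
  have "Conn Ed (C - {\<nu> z}) W" by (rule Conn_mono_V[OF assms(1)]) (use WC z in auto)
  then obtain a where a: "a + card W \<le> L - 1" "W = (\<lambda>t. \<nu> ((z + 1 + t) mod L)) ` {a..<a + card W}"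
    using r.window by blast
  have "(\<lambda>t. \<nu> ((z + 1 + t) mod L)) ` {a..<a + card W} = cw (card W) ((z + 1 + a) mod L)"
  proof -
    have hI: "{a..<a + card W} = (\<lambda>t. a + t) ` {0..<card W}"
      using image_add_atLeastLessThan[of a 0 "card W"] by (simp add: add.commute)
    have "(\<lambda>t. \<nu> ((z + 1 + t) mod L)) ` {a..<a + card W} = (\<lambda>t. \<nu> ((z + 1 + (a + t)) mod L)) ` {0..<card W}"
      by (simp only: hI image_image)
    also have "\<dots> = cw (card W) ((z + 1 + a) mod L)"
      unfolding cw_def by (simp add: mod_add_left_eq add.assoc)
    finally show ?thesis .
  qed
  moreover have "(z + 1 + a) mod L < L" using z by simp
  ultimately show ?thesis using a by metis
qed

lemma cw_conn:
  assumes "b < L" "1 \<le> u"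
  shows "Conn Ed C (cw u b)"
proof (rule chain_conn[where \<beta> = "\<lambda>t. \<nu> ((b + t) mod L)" and u = u])
  show "(\<lambda>t. \<nu> ((b + t) mod L)) ` {0..<u} = cw u b" unfolding cw_def ..
  show "1 \<le> u" by fact
  show "cw u b \<subseteq> C" unfolding cw_def using img assms by auto
  fix t assume "Suc t < u"
  have m: "(b + t) mod L < L" "(b + Suc t) mod L < L" using assms by auto
  have "Suc ((b + t) mod L) mod L = (b + Suc t) mod L" by (simp add: mod_Suc_eq)
  then show "{\<nu> ((b + t) mod L), \<nu> ((b + Suc t) mod L)} \<in> Ed" using cp[OF m] by simp
qed

lemma cw_img: "cw u b = \<nu> ` ((\<lambda>t. (b + t) mod L) ` {0..<u})"
  unfolding cw_def by (simp add: image_image)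

lemma cw_card:
  assumes "u \<le> L"
  shows "card (cw u b) = u"
proof -
  have Lpos: "0 < L \<or> u = 0" using assms by auto
  have i1: "inj_on (\<lambda>t. (b + t) mod L) {0..<u}"
  proof (rule inj_onI)
    fix s t assume st: "s \<in> {0..<u}" "t \<in> {0..<u}" "(b + s) mod L = (b + t) mod L"
    moreover have "s < L" "t < L" using st assms by auto
    ultimately show "s = t" using modcancel[of b s L t] by blast
  qed
  have s: "(\<lambda>t. (b + t) mod L) ` {0..<u} \<subseteq> {0..<L}" using assms by auto
  have "card (cw u b) = card ((\<lambda>t. (b + t) mod L) ` {0..<u})"
    unfolding cw_img by (rule card_image[OF inj_on_subset[OF inj s]])
  also have "\<dots> = u" using i1 by (simp add: card_image)
  finally show ?thesis .
qed

lemma cw_inj: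
  assumes "1 \<le> u" "u < L"
  shows "inj_on (cw u) {0..<L}"
proof (rule inj_onI, rule ccontr)
  fix b b' assume b: "b \<in> {0..<L}" "b' \<in> {0..<L}" and e: "cw u b = cw u b'" and ne: "b \<noteq> b'"
  let ?I = "\<lambda>b. (\<lambda>t. (b + t) mod L) ` {0..<u}"
  have s: "?I b \<subseteq> {0..<L}" "?I b' \<subseteq> {0..<L}" using assms by auto
  have Ieq: "?I b = ?I b'" using e unfolding cw_img using inj_on_image_eq_iff[OF inj s] by simp
  have "b' \<in> ?I b'" using b assms by (auto intro!: image_eqI[of _ _ 0])
  then have "b' \<in> ?I b" using Ieq by simp
  then obtain t0 where t0: "t0 < u" "b' = (b + t0) mod L" by auto
  have t0pos: "t0 \<noteq> 0"
  proof
    assume "t0 = 0"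
    then have "b' = b" using t0 b by simp
    then show False using ne by simp
  qed
  have "(b' + (L - 1)) mod L = (b + t0 + (L - 1)) mod L" using t0 by (simp add: mod_add_left_eq)
  also have "b + t0 + (L - 1) = (b + (t0 - 1)) + L" using t0pos assms by simp
  finally have p: "(b' + (L - 1)) mod L = (b + (t0 - 1)) mod L" by simp
  have "(b + (t0 - 1)) mod L \<in> ?I b" using t0 by auto
  then have "(b' + (L - 1)) mod L \<in> ?I b'" using p Ieq by simp
  then obtain t1 where t1: "t1 < u" "(b' + (L - 1)) mod L = (b' + t1) mod L" by auto
  then have "L - 1 = t1" using modcancel[of b' "L - 1" L t1] assms by auto
  then show False using t1 assms by simp
qed

lemma count:
  assumes "1 \<le> u" "u < L"
  shows "card {W. Conn Ed C W \<and> card W = u} = L"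
proof -
  have eq: "{W. Conn Ed C W \<and> card W = u} = cw u ` {0..<L}"
  proof (rule set_eqI, rule iffI)
    fix W assume "W \<in> {W. Conn Ed C W \<and> card W = u}"
    then have c: "Conn Ed C W" "card W = u" by auto
    then obtain b where "b < L" "W = cw u b" using window[OF c(1)] assms by auto
    then show "W \<in> cw u ` {0..<L}" by auto
  next
    fix W assume "W \<in> cw u ` {0..<L}"
    then obtain b where "b < L" "W = cw u b" by auto
    then show "W \<in> {W. Conn Ed C W \<and> card W = u}" using cw_conn cw_card assms by auto
  qed
  have "card (cw u ` {0..<L}) = card {0..<L}" by (rule card_image[OF cw_inj[OF assms]])
  then show ?thesis by (simp only: eq card_atLeastLessThan diff_zero)
qed

end



lemma path_apath:
  assumes "distinct vs" "Ed = {{vs ! i, vs ! (i + 1)} | i. i + 1 < length vs}"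
  shows "apath (nth vs) (length vs) (set vs) Ed"
proof
  show "bij_betw (nth vs) {0..<length vs} (set vs)"
    unfolding bij_betw_def using assms(1)
    by (auto simp: inj_on_nth set_conv_nth)
  fix i j assume ij: "i < length vs" "j < length vs"
  show "({vs ! i, vs ! j} \<in> Ed) = (Suc i = j \<or> Suc j = i)"
  proof
    assume "{vs ! i, vs ! j} \<in> Ed"
    then obtain t where t: "t + 1 < length vs" "{vs ! i, vs ! j} = {vs ! t, vs ! (t + 1)}" using assms(2) by auto
    then have "(vs ! i = vs ! t \<and> vs ! j = vs ! (t + 1)) \<or> (vs ! i = vs ! (t + 1) \<and> vs ! j = vs ! t)"
      by (auto simp: doubleton_eq_iff)
    then have "(i = t \<and> j = t + 1) \<or> (i = t + 1 \<and> j = t)"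
      using nth_eq_iff_index_eq[OF assms(1)] ij t by auto
    then show "Suc i = j \<or> Suc j = i" by auto
  next
    assume "Suc i = j \<or> Suc j = i"
    then show "{vs ! i, vs ! j} \<in> Ed"
    proof
      assume "Suc i = j" then show ?thesis using assms(2) ij by auto
    next
      assume "Suc j = i" then show ?thesis using assms(2) ij by (auto simp: insert_commute)
    qed
  qed
qed

lemma path_edges_card:
  assumes "distinct vs" "Ed = {{vs ! i, vs ! (i + 1)} | i. i + 1 < length vs}"
  shows "card Ed = length vs - 1"
proof -
  have eq: "Ed = (\<lambda>t. {vs ! t, vs ! (t + 1)}) ` {0..<length vs - 1}" using assms(2) by auto
  have "inj_on (\<lambda>t. {vs ! t, vs ! (t + 1)}) {0..<length vs - 1}"
  proof (rule inj_onI)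
    fix s t assume st: "s \<in> {0..<length vs - 1}" "t \<in> {0..<length vs - 1}" "{vs ! s, vs ! (s + 1)} = {vs ! t, vs ! (t + 1)}"
    then have "(vs ! s = vs ! t \<and> vs ! (s+1) = vs ! (t + 1)) \<or> (vs ! s = vs ! (t + 1) \<and> vs ! (s+1) = vs ! t)"
      by (auto simp: doubleton_eq_iff)
    then have "s = t \<or> (s = t + 1 \<and> s + 1 = t)"
      using nth_eq_iff_index_eq[OF assms(1)] st by auto
    then show "s = t" by auto
  qed
  then show ?thesis unfolding eq by (simp add: card_image)
qed

lemma cycle_acycle:
  assumes "distinct vs" "Ed = {{vs ! i, vs ! ((i + 1) mod length vs)} | i. i < length vs}"
  shows "acycle (nth vs) (length vs) (set vs) Ed"
proof
  let ?L = "length vs"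
  show "bij_betw (nth vs) {0..<?L} (set vs)"
    unfolding bij_betw_def using assms(1)
    by (auto simp: inj_on_nth set_conv_nth)
  fix i j assume ij: "i < ?L" "j < ?L"
  show "({vs ! i, vs ! j} \<in> Ed) = (Suc i mod ?L = j \<or> Suc j mod ?L = i)"
  proof
    assume "{vs ! i, vs ! j} \<in> Ed"
    then obtain t where t: "t < ?L" "{vs ! i, vs ! j} = {vs ! t, vs ! ((t + 1) mod ?L)}" using assms(2) by auto
    have "0 < ?L" using t by linarith
    then have m: "(t + 1) mod ?L < ?L" by simp
    from t have "(vs ! i = vs ! t \<and> vs ! j = vs ! ((t + 1) mod ?L)) \<or> (vs ! i = vs ! ((t + 1) mod ?L) \<and> vs ! j = vs ! t)"
      by (auto simp: doubleton_eq_iff)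
    then have "(i = t \<and> j = (t + 1) mod ?L) \<or> (i = (t + 1) mod ?L \<and> j = t)"
      using nth_eq_iff_index_eq[OF assms(1)] ij t m by auto
    then show "Suc i mod ?L = j \<or> Suc j mod ?L = i" by auto
  next
    assume "Suc i mod ?L = j \<or> Suc j mod ?L = i"
    then show "{vs ! i, vs ! j} \<in> Ed"
    proof
      assume "Suc i mod ?L = j" then show ?thesis using assms(2) ij by auto
    next
      assume "Suc j mod ?L = i" then show ?thesis using assms(2) ij by (auto simp: insert_commute)
    qed
  qed
qed

lemma cycle_edges_card:
  assumes "distinct vs" "Ed = {{vs ! i, vs ! ((i + 1) mod length vs)} | i. i < length vs}" "3 \<le> length vs"
  shows "card Ed = length vs"
proof -
  let ?L = "length vs"
  have eq: "Ed = (\<lambda>t. {vs ! t, vs ! ((t + 1) mod ?L)}) ` {0..<?L}" using assms(2) by auto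
  have "inj_on (\<lambda>t. {vs ! t, vs ! ((t + 1) mod ?L)}) {0..<?L}"
  proof (rule inj_onI)
    fix s t assume st: "s \<in> {0..<?L}" "t \<in> {0..<?L}" "{vs ! s, vs ! ((s + 1) mod ?L)} = {vs ! t, vs ! ((t + 1) mod ?L)}"
    have m: "(s + 1) mod ?L < ?L" "(t + 1) mod ?L < ?L" using st by (auto intro!: mod_less_divisor)
    from st have "(vs ! s = vs ! t \<and> vs ! ((s+1) mod ?L) = vs ! ((t + 1) mod ?L)) \<or> (vs ! s = vs ! ((t + 1) mod ?L) \<and> vs ! ((s+1) mod ?L) = vs ! t)"
      by (auto simp: doubleton_eq_iff)
    then have "s = t \<or> (s = (t + 1) mod ?L \<and> (s + 1) mod ?L = t)"
      using nth_eq_iff_index_eq[OF assms(1)] st m by auto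
    then show "s = t"
    proof
      assume h: "s = (t + 1) mod ?L \<and> (s + 1) mod ?L = t"
      have "t = (s + 1) mod ?L" by (rule sym) (rule h[THEN conjunct2])
      also have "\<dots> = ((t + 1) mod ?L + 1) mod ?L" by (simp only: h[THEN conjunct1])
      also have "\<dots> = (t + 2) mod ?L" by (simp add: mod_Suc_eq)
      finally have "(t + 2) mod ?L = (t + 0) mod ?L" using st by simp
      then have "2 = (0::nat)" using modcancel[of t 2 ?L 0] assms(3) by linarith
      then show ?thesis by simp
    qed
  qed
  then show ?thesis unfolding eq by (simp add: card_image)
qed



locale gcomp =
  fixes k :: nat and V :: "'a set" and E :: "'a set set"
  assumes gr: "graph V E"
    and hyp: "\<forall>C\<in>components V E.
           (is_cycle C (induced_edges E C) \<and> card C > k) \<or>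
           (is_path C (induced_edges E C) \<and> card C \<ge> k - 1)"
begin

abbreviation "R \<equiv> (adj E)\<^sup>*\<^sup>*"
definition comp :: "'a \<Rightarrow> 'a set" where "comp u = {v\<in>V. R u v}"

lemma finV: "finite V" using gr unfolding graph_def by auto

lemma edge_sub: "e \<in> E \<Longrightarrow> e \<subseteq> V \<and> card e = 2" using gr unfolding graph_def by auto

lemma comps_eq: "components V E = comp ` V"
  unfolding components_def comp_def by auto

lemma R_sym: "R x y \<Longrightarrow> R y x"
proof -
  have "symp (adj E)" unfolding symp_def adj_def by (auto simp: insert_commute)
  then have "symp R" by (rule symp_rtranclp)
  then show "R x y \<Longrightarrow> R y x" by (auto dest: sympD)
qed

lemma comp_self: "u \<in> V \<Longrightarrow> u \<in> comp u" unfolding comp_def by auto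

lemma comp_eq:
  assumes "w \<in> comp u"
  shows "comp w = comp u"
proof -
  have Ruw: "R u w" using assms unfolding comp_def by auto
  have "R w v \<longleftrightarrow> R u v" for v
  proof
    assume "R w v" then show "R u v" using Ruw by (rule rtranclp_trans[rotated])
  next
    assume "R u v" then show "R w v" using R_sym[OF Ruw] by (rule rtranclp_trans[rotated])
  qed
  then show ?thesis unfolding comp_def by auto
qed

lemma comp_disj:
  assumes "C1 \<in> components V E" "C2 \<in> components V E" "x \<in> C1" "x \<in> C2"
  shows "C1 = C2"
proof -
  obtain u1 u2 where "C1 = comp u1" "C2 = comp u2" using assms(1,2) unfolding comps_eq by auto
  then show ?thesis using comp_eq[of x u1] comp_eq[of x u2] assms(3,4) by simp
qed

lemma comp_sub: "C \<in> components V E \<Longrightarrow> C \<subseteq> V \<and> C \<noteq> {}"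
  unfolding comps_eq comp_def by (auto)

lemma edge_in:
  assumes "C \<in> components V E" "x \<in> C" "{x, y} \<in> E"
  shows "y \<in> C"
proof -
  obtain u where u: "u \<in> V" "C = comp u" using assms(1) unfolding comps_eq by auto
  have "R u x" using assms(2) u unfolding comp_def by auto
  moreover have "adj E x y" using assms(3) unfolding adj_def by simp
  ultimately have "R u y" by (rule rtranclp.rtrancl_into_rtrancl)
  moreover have "y \<in> V" using edge_sub[OF assms(3)] by auto
  ultimately show ?thesis using u unfolding comp_def by auto
qed

lemma Conn_in_comp:
  assumes "Conn E V W"
  shows "\<exists>C\<in>components V E. W \<subseteq> C"
proof -
  obtain w where w: "w \<in> W" using assms unfolding Conn_def by auto
  have wV: "w \<in> V" using w assms unfolding Conn_def by auto
  let ?C = "comp w"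
  have Cc: "?C \<in> components V E" unfolding comps_eq using wV by auto
  have "W \<subseteq> ?C"
  proof (rule ccontr)
    assume nsub: "\<not> W \<subseteq> ?C"
    let ?W1 = "W \<inter> ?C"
    have "?W1 \<subseteq> W" "?W1 \<noteq> {}" "?W1 \<noteq> W" using w wV comp_self nsub by auto
    then obtain x y where xy: "x \<in> ?W1" "y \<in> W - ?W1" "{x, y} \<in> E"
      using assms unfolding Conn_def by meson
    have "y \<in> ?C" using edge_in[OF Cc _ xy(3)] xy(1) by auto
    then show False using xy(2) by auto
  qed
  then show ?thesis using Cc by auto
qed

lemma Conn_restrict:
  assumes "C \<in> components V E" "W \<subseteq> C"
  shows "Conn E V W \<longleftrightarrow> Conn (induced_edges E C) C W"
proof -
  have CV: "C \<subseteq> V" using comp_sub[OF assms(1)] by auto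
  have ee: "{x, y} \<in> E \<longleftrightarrow> {x, y} \<in> induced_edges E C" if "x \<in> W" "y \<in> W" for x y
    using that assms(2) unfolding induced_edges_def by auto
  have WV: "W \<subseteq> V" using assms(2) CV by auto
  have eq: "(\<exists>x\<in>W1. \<exists>y\<in>W - W1. {x, y} \<in> E) \<longleftrightarrow> (\<exists>x\<in>W1. \<exists>y\<in>W - W1. {x, y} \<in> induced_edges E C)"
    if "W1 \<subseteq> W" for W1
  proof -
    have "\<And>x y. x \<in> W1 \<Longrightarrow> y \<in> W - W1 \<Longrightarrow> ({x, y} \<in> E) = ({x, y} \<in> induced_edges E C)"
      using ee that by blast
    then show ?thesis by blast
  qed
  show ?thesis
  proof
    assume h: "Conn E V W"
    show "Conn (induced_edges E C) C W" unfolding Conn_def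
    proof (intro conjI allI impI)
      show "W \<subseteq> C" "W \<noteq> {}" using assms(2) h unfolding Conn_def by auto
      fix W1 assume w1: "W1 \<subseteq> W" "W1 \<noteq> {}" "W1 \<noteq> W"
      have "\<exists>x\<in>W1. \<exists>y\<in>W - W1. {x, y} \<in> E"
        using h w1 unfolding Conn_def by blast
      then show "\<exists>x\<in>W1. \<exists>y\<in>W - W1. {x, y} \<in> induced_edges E C"
        using eq[OF w1(1)] by simp
    qed
  next
    assume h: "Conn (induced_edges E C) C W"
    show "Conn E V W" unfolding Conn_def
    proof (intro conjI allI impI)
      show "W \<subseteq> V" "W \<noteq> {}" using WV h unfolding Conn_def by auto
      fix W1 assume w1: "W1 \<subseteq> W" "W1 \<noteq> {}" "W1 \<noteq> W"
      have "\<exists>x\<in>W1. \<exists>y\<in>W - W1. {x, y} \<in> induced_edges E C"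
        using h w1 unfolding Conn_def by blast
      then show "\<exists>x\<in>W1. \<exists>y\<in>W - W1. {x, y} \<in> E"
        using eq[OF w1(1)] by simp
    qed
  qed
qed

definition delta :: "'a set \<Rightarrow> nat" where
  "delta C = (if is_cycle C (induced_edges E C) \<and> card C > k then 0 else 1)"

lemma comp_facts:
  assumes "C \<in> components V E"
  shows "(\<forall>u. 1 \<le> u \<longrightarrow> u \<le> k \<longrightarrow> card {W. Conn (induced_edges E C) C W \<and> card W = u} + (u - 1) * delta C = card C)
    \<and> card (induced_edges E C) + delta C = card C
    \<and> (\<forall>W. Conn (induced_edges E C) C W \<longrightarrow> card W \<le> k \<longrightarrow>
          (\<exists>\<beta>. bij_betw \<beta> {0..<card W} W \<and>
             (\<forall>s<card W. \<forall>t<card W. ({\<beta> s, \<beta> t} \<in> induced_edges E C) = ({s, t} \<in> Pu (card W)))))"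
proof (cases "is_cycle C (induced_edges E C) \<and> card C > k")
  case True
  then have d: "delta C = 0" unfolding delta_def by simp
  obtain vs where vs: "distinct vs" "length vs \<ge> 3" "set vs = C"
    "induced_edges E C = {{vs ! i, vs ! ((i + 1) mod length vs)} | i. i < length vs}"
    using True[THEN conjunct1] unfolding is_cycle_def by (elim exE conjE) simp
  have L: "length vs = card C" using distinct_card[OF vs(1)] vs(3) by simp
  interpret c: acycle "nth vs" "length vs" C "induced_edges E C"
    using cycle_acycle[OF vs(1) vs(4)] unfolding vs(3) .
  show ?thesis
  proof (intro conjI allI impI)
    fix u assume "1 \<le> u" "u \<le> k"
    then show "card {W. Conn (induced_edges E C) C W \<and> card W = u} + (u - 1) * delta C = card C"
      using c.count[of u] True L d by simp
  next
    show "card (induced_edges E C) + delta C = card C"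
      using cycle_edges_card[OF vs(1) vs(4) vs(2)] L d by simp
  next
    fix W assume "Conn (induced_edges E C) C W" "card W \<le> k"
    then show "\<exists>\<beta>. bij_betw \<beta> {0..<card W} W \<and>
             (\<forall>s<card W. \<forall>t<card W. ({\<beta> s, \<beta> t} \<in> induced_edges E C) = ({s, t} \<in> Pu (card W)))"
      using c.good True L by simp
  qed
next
  case False
  then have d: "delta C = 1" unfolding delta_def by simp
  have P: "is_path C (induced_edges E C)" "card C \<ge> k - 1" using False hyp assms by auto
  obtain vs where vs: "distinct vs" "length vs \<ge> 1" "set vs = C"
    "induced_edges E C = {{vs ! i, vs ! (i + 1)} | i. i + 1 < length vs}"
    using P(1) unfolding is_path_def by (elim exE conjE) simp
  have L: "length vs = card C" using distinct_card[OF vs(1)] vs(3) by simp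
  interpret p: apath "nth vs" "length vs" C "induced_edges E C"
    using path_apath[OF vs(1) vs(4)] unfolding vs(3) .
  show ?thesis
  proof (intro conjI allI impI)
    fix u assume u: "1 \<le> u" "u \<le> k"
    then show "card {W. Conn (induced_edges E C) C W \<and> card W = u} + (u - 1) * delta C = card C"
      using p.count[of u] P(2) L d by simp
  next
    show "card (induced_edges E C) + delta C = card C"
      using path_edges_card[OF vs(1) vs(4)] L d vs(2) by simp
  next
    fix W assume "Conn (induced_edges E C) C W" "card W \<le> k"
    then show "\<exists>\<beta>. bij_betw \<beta> {0..<card W} W \<and>
             (\<forall>s<card W. \<forall>t<card W. ({\<beta> s, \<beta> t} \<in> induced_edges E C) = ({s, t} \<in> Pu (card W)))"
      using p.good by simp
  qed
qed


lemma fin_comps: "finite (components V E)" unfolding comps_eq using finV by simp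

lemma fin_comp: "C \<in> components V E \<Longrightarrow> finite C"
  using comp_sub finV finite_subset by blast

lemma Union_comps: "\<Union> (components V E) = V"
  unfolding comps_eq using comp_self comp_def by auto

lemma card_V: "card V = (\<Sum>C\<in>components V E. card C)"
proof -
  have "card (\<Union> (components V E)) = (\<Sum>C\<in>components V E. card C)"
  proof (rule card_Union_disjoint)
    show "pairwise disjnt (components V E)"
      unfolding pairwise_def disjnt_def using comp_disj by blast
    show "\<And>C. C \<in> components V E \<Longrightarrow> finite C" by (rule fin_comp)
  qed
  then show ?thesis using Union_comps by simp
qed

lemma card_E: "card E = (\<Sum>C\<in>components V E. card (induced_edges E C))"
proof -
  have eq: "E = (\<Union>C\<in>components V E. induced_edges E C)"
  proof (rule set_eqI, rule iffI)
    fix e assume e: "e \<in> E"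
    then obtain x y where xy: "e = {x, y}" "x \<noteq> y" using edge_sub[OF e] by (auto simp: card_2_iff)
    have xV: "x \<in> V" using edge_sub[OF e] xy by auto
    have Cc: "comp x \<in> components V E" unfolding comps_eq using xV by auto
    have "y \<in> comp x" using edge_in[OF Cc comp_self[OF xV]] e xy by simp
    then have "e \<subseteq> comp x" using xy comp_self[OF xV] by auto
    then show "e \<in> (\<Union>C\<in>components V E. induced_edges E C)" using Cc e unfolding induced_edges_def by auto
  next
    fix e assume "e \<in> (\<Union>C\<in>components V E. induced_edges E C)"
    then show "e \<in> E" unfolding induced_edges_def by auto
  qed
  have "card (\<Union>C\<in>components V E. induced_edges E C) = (\<Sum>C\<in>components V E. card (induced_edges E C))"
  proof (rule card_UN_disjoint)
    show "finite (components V E)" by (rule fin_comps)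
    show "\<forall>C\<in>components V E. finite (induced_edges E C)"
    proof
      fix C assume "C \<in> components V E"
      have "induced_edges E C \<subseteq> Pow C" unfolding induced_edges_def by auto
      then show "finite (induced_edges E C)" using fin_comp[OF \<open>C \<in> components V E\<close>] finite_subset by blast
    qed
    show "\<forall>C\<in>components V E. \<forall>C'\<in>components V E. C \<noteq> C' \<longrightarrow> induced_edges E C \<inter> induced_edges E C' = {}"
    proof (intro ballI impI)
      fix C C' assume C: "C \<in> components V E" "C' \<in> components V E" "C \<noteq> C'"
      show "induced_edges E C \<inter> induced_edges E C' = {}"
      proof (rule ccontr)
        assume "induced_edges E C \<inter> induced_edges E C' \<noteq> {}"
        then obtain e where e: "e \<in> E" "e \<subseteq> C" "e \<subseteq> C'" unfolding induced_edges_def by auto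
        then have "e \<noteq> {}" using edge_sub[OF e(1)] by auto
        then obtain x where "x \<in> e" by auto
        then show False using comp_disj[OF C(1,2)] e C(3) by auto
      qed
    qed
  qed
  then show ?thesis using eq by simp
qed

lemma cnt_sum: "cnt E V u = (\<Sum>C\<in>components V E. card {W. Conn (induced_edges E C) C W \<and> card W = u})"
proof -
  have eq: "{W. Conn E V W \<and> card W = u} = (\<Union>C\<in>components V E. {W. Conn (induced_edges E C) C W \<and> card W = u})"
  proof (rule set_eqI, rule iffI)
    fix W assume W: "W \<in> {W. Conn E V W \<and> card W = u}"
    then obtain C where C: "C \<in> components V E" "W \<subseteq> C" using Conn_in_comp by blast
    then show "W \<in> (\<Union>C\<in>components V E. {W. Conn (induced_edges E C) C W \<and> card W = u})"
      using Conn_restrict[OF C] W by auto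
  next
    fix W assume "W \<in> (\<Union>C\<in>components V E. {W. Conn (induced_edges E C) C W \<and> card W = u})"
    then obtain C where C: "C \<in> components V E" "Conn (induced_edges E C) C W" "card W = u" by auto
    then have "W \<subseteq> C" unfolding Conn_def by auto
    then show "W \<in> {W. Conn E V W \<and> card W = u}" using Conn_restrict[OF C(1)] C by auto
  qed
  have "card (\<Union>C\<in>components V E. {W. Conn (induced_edges E C) C W \<and> card W = u})
      = (\<Sum>C\<in>components V E. card {W. Conn (induced_edges E C) C W \<and> card W = u})"
  proof (rule card_UN_disjoint)
    show "finite (components V E)" by (rule fin_comps)
    show "\<forall>C\<in>components V E. finite {W. Conn (induced_edges E C) C W \<and> card W = u}"
    proof
      fix C assume "C \<in> components V E"
      have "{W. Conn (induced_edges E C) C W \<and> card W = u} \<subseteq> Pow C" unfolding Conn_def by auto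
      then show "finite {W. Conn (induced_edges E C) C W \<and> card W = u}"
        using fin_comp[OF \<open>C \<in> components V E\<close>] finite_subset by blast
    qed
    show "\<forall>C\<in>components V E. \<forall>C'\<in>components V E. C \<noteq> C' \<longrightarrow>
        {W. Conn (induced_edges E C) C W \<and> card W = u} \<inter> {W. Conn (induced_edges E C') C' W \<and> card W = u} = {}"
    proof (intro ballI impI)
      fix C C' assume C: "C \<in> components V E" "C' \<in> components V E" "C \<noteq> C'"
      show "{W. Conn (induced_edges E C) C W \<and> card W = u} \<inter> {W. Conn (induced_edges E C') C' W \<and> card W = u} = {}"
      proof (rule ccontr)
        assume "{W. Conn (induced_edges E C) C W \<and> card W = u} \<inter> {W. Conn (induced_edges E C') C' W \<and> card W = u} \<noteq> {}"
        then obtain W where "Conn (induced_edges E C) C W" "Conn (induced_edges E C') C' W" by auto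
        then have "W \<subseteq> C" "W \<subseteq> C'" "W \<noteq> {}" unfolding Conn_def by auto
        then obtain x where "x \<in> C" "x \<in> C'" by auto
        then show False using comp_disj[OF C(1,2)] C(3) by auto
      qed
    qed
  qed
  then show ?thesis unfolding cnt_def eq .
qed

lemma numbers: "\<exists>P. card E + P = card V \<and> (\<forall>u. 1 \<le> u \<longrightarrow> u \<le> k \<longrightarrow> cnt E V u + (u - 1) * P = card V)"
proof (intro exI conjI allI impI)
  let ?P = "\<Sum>C\<in>components V E. delta C"
  show "card E + ?P = card V"
    unfolding card_E card_V sum.distrib[symmetric] using comp_facts by (intro sum.cong) auto
  fix u assume u: "1 \<le> u" "u \<le> k"
  show "cnt E V u + (u - 1) * ?P = card V"
    unfolding cnt_sum card_V sum_distrib_left sum.distrib[symmetric] using comp_facts u by (intro sum.cong) auto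
qed

lemma good: "goodG k V E"
  unfolding goodG_def
proof (intro conjI allI impI)
  show "finite V" by (rule finV)
  fix W assume W: "Conn E V W" "card W \<le> k"
  then obtain C where C: "C \<in> components V E" "W \<subseteq> C" using Conn_in_comp by blast
  have "Conn (induced_edges E C) C W" using Conn_restrict[OF C] W by simp
  then obtain \<beta> where b: "bij_betw \<beta> {0..<card W} W"
    "\<forall>s<card W. \<forall>t<card W. ({\<beta> s, \<beta> t} \<in> induced_edges E C) = ({s, t} \<in> Pu (card W))"
    using comp_facts[OF C(1)] W(2) by blast
  have "({\<beta> s, \<beta> t} \<in> E) = ({s, t} \<in> Pu (card W))" if "s < card W" "t < card W" for s t
  proof -
    have "\<beta> s \<in> W" "\<beta> t \<in> W" using b(1) that by (auto dest: bij_betwE)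
    then have "({\<beta> s, \<beta> t} \<in> E) = ({\<beta> s, \<beta> t} \<in> induced_edges E C)" using C(2) unfolding induced_edges_def by auto
    then show ?thesis using b(2) that by simp
  qed
  then show "\<exists>\<beta>. bij_betw \<beta> {0..<card W} W \<and> (\<forall>a<card W. \<forall>b<card W. ({\<beta> a, \<beta> b} \<in> E) = ({a, b} \<in> Pu (card W)))"
    using b(1) by blast
qed

end



theorem theorem1p7:
  fixes k :: nat and V :: "'a set" and E :: "'a set set"
    and V' :: "'b set" and E' :: "'b set set"
  assumes "k \<ge> 1"
    and "graph V E" and "graph V' E'"
    and "max_degree_le V E 2" and "max_degree_le V' E' 2"
    and "card V = card V'" and "card E = card E'"
    and "\<forall>C\<in>components V E.
           (is_cycle C (induced_edges E C) \<and> card C > k) \<or>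
           (is_path C (induced_edges E C) \<and> card C \<ge> k - 1)"
    and "\<forall>C\<in>components V' E'.
           (is_cycle C (induced_edges E' C) \<and> card C > k) \<or>
           (is_path C (induced_edges E' C) \<and> card C \<ge> k - 1)"
  shows "deck k V E = deck k V' E'"
proof -
  interpret g1: gcomp k V E using assms(2,8) by unfold_locales
  interpret g2: gcomp k V' E' using assms(3,9) by unfold_locales
  obtain P where P: "card E + P = card V" "\<forall>u. 1 \<le> u \<longrightarrow> u \<le> k \<longrightarrow> cnt E V u + (u - 1) * P = card V"
    using g1.numbers by blast
  obtain P' where P': "card E' + P' = card V'" "\<forall>u. 1 \<le> u \<longrightarrow> u \<le> k \<longrightarrow> cnt E' V' u + (u - 1) * P' = card V'"
    using g2.numbers by blast
  have PP: "P = P'" using P(1) P'(1) assms(6,7) by linarith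
  have c: "cnt E V u = cnt E' V' u" if "1 \<le> u" "u \<le> k" for u
    using P(2) P'(2) that PP assms(6) by (metis add_right_cancel)
  have N: "Ncount E V {0..<k} T = Ncount E' V' {0..<k} T" if "T \<subseteq> atoms {0..<k}" for T
    using Ncount_eq[OF g1.good g2.good c, of "{0..<k}" T] that by simp
  have Ex: "Exact E V {0..<k} S = Exact E' V' {0..<k} S" if "S \<subseteq> atoms {0..<k}" for S
  proof -
    have "int (Exact E V {0..<k} S) = int (Exact E' V' {0..<k} S)"
      unfolding exact_ie[OF finite_atLeastLessThan g1.finV] exact_ie[OF finite_atLeastLessThan g2.finV]
      using N by (intro sum.cong) auto
    then show ?thesis by simp
  qed
  show ?thesis by (rule deck_from_exact[OF g1.finV g2.finV Ex])
qed


end
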